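(* Let $V$ be a Lie superalgebra over $k$ such that for every ideal $W$ of $V$ the centre $Z(W)=\{w\in W:[w,W]=0\}$ is zero. Let $\mathcal A=\mathrm{Curr}(V)$. Then $\sigma(V)\subseteq V$ for every automorphism $\sigma$ of the $k$-conformal superalgebra $\mathcal A$ (where $V$ is identified with $1\otimes V\subseteq\mathcal A$).
   Context: Let $k$ be a field of characteristic $0$. A $k$-conformal superalgebra is a $\mathbb Z/2\mathbb Z$-graded $k$-space $\mathcal A$ with an even linear map $\partial_{\mathcal A}$ and bilinear products $a_{(n)}b$ ($n\in\mathbb Z_+$) with $a_{(n)}b=0$ for $n\gg0$, $(\partial_{\mathcal A}a)_{(n)}b=-na_{(n-1)}b$, $a_{(n)}\partial_{\mathcal A}b=\partial_{\mathcal A}(a_{(n)}b)+na_{(n-1)}b$; an automorphism is a bijective even linear map preserving all $n$-products and commuting with $\partial_{\mathcal A}$. The current conformal superalgebra of a Lie superalgebra $V$ is $\mathrm{Curr}(V)=k[\partial]\otimes_kV$, with $\partial_{\mathcal A}$ acting by multiplication by $\partial$, grading from $V$, and $n$-products determined by $v_{(0)}w=[v,w]$ and $v_{(n)}w=0$ for $n\ge1$ ($v,w\in V$), extended to all of $k[\partial]\otimes V$ via the axiom (CS1) above (equivalently $\lambda$-bracket $[p(\partial)v_\lambda q(\partial)w]=p(-\lambda)q(\partial+\lambda)[v,w]$). *)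

theory Defs
  imports Complex_Main
begin

text \<open>A Lie superalgebra over a field k is modelled on a type 'v (the whole type is V),
with scalar multiplication scale, bracket br, and a Z/2-grading V = V0 (+) V1.
Parity is encoded by a boolean (False = even, True = odd).\<close>

definition homog :: "'v set \<Rightarrow> 'v set \<Rightarrow> bool \<Rightarrow> 'v set" where
  "homog V0 V1 p = (if p then V1 else V0)"

definition ssign :: "bool \<Rightarrow> bool \<Rightarrow> 'k::field" where
  "ssign p q = (if p \<and> q then -1 else 1)"

definition lie_superalgebra ::
  "('k::field \<Rightarrow> 'v::ab_group_add \<Rightarrow> 'v) \<Rightarrow> ('v \<Rightarrow> 'v \<Rightarrow> 'v) \<Rightarrow> 'v set \<Rightarrow> 'v set \<Rightarrow> bool" where
  "lie_superalgebra scale br V0 V1 \<longleftrightarrow>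
     vector_space scale \<and>
     module.subspace scale V0 \<and> module.subspace scale V1 \<and>
     V0 \<inter> V1 = {0} \<and> (\<forall>v. \<exists>a\<in>V0. \<exists>b\<in>V1. v = a + b) \<and>
     (\<forall>a b c. br (a + b) c = br a c + br b c) \<and>
     (\<forall>a b c. br a (b + c) = br a b + br a c) \<and>
     (\<forall>r a b. br (scale r a) b = scale r (br a b)) \<and>
     (\<forall>r a b. br a (scale r b) = scale r (br a b)) \<and>
     (\<forall>p q a b. a \<in> homog V0 V1 p \<longrightarrow> b \<in> homog V0 V1 q \<longrightarrow>
        br a b \<in> homog V0 V1 (p \<noteq> q)) \<and>
     (\<forall>p q a b. a \<in> homog V0 V1 p \<longrightarrow> b \<in> homog V0 V1 q \<longrightarrow>
        br a b = - scale (ssign p q) (br b a)) \<and>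
     (\<forall>p q a b c. a \<in> homog V0 V1 p \<longrightarrow> b \<in> homog V0 V1 q \<longrightarrow>
        br a (br b c) = br (br a b) c + scale (ssign p q) (br b (br a c)))"

definition super_ideal ::
  "('k::field \<Rightarrow> 'v::ab_group_add \<Rightarrow> 'v) \<Rightarrow> ('v \<Rightarrow> 'v \<Rightarrow> 'v) \<Rightarrow> 'v set \<Rightarrow> 'v set \<Rightarrow> 'v set \<Rightarrow> bool" where
  "super_ideal scale br V0 V1 W \<longleftrightarrow>
     module.subspace scale W \<and>
     (\<forall>w\<in>W. \<exists>a\<in>W \<inter> V0. \<exists>b\<in>W \<inter> V1. w = a + b) \<and>
     (\<forall>v. \<forall>w\<in>W. br v w \<in> W)"

definition centre :: "('v \<Rightarrow> 'v \<Rightarrow> 'v::zero) \<Rightarrow> 'v set \<Rightarrow> 'v set" where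
  "centre br W = {w \<in> W. \<forall>u\<in>W. br w u = 0}"

text \<open>The current conformal superalgebra Curr(V) = k[\<partial>] \<otimes> V: an element
  \<Sum>i \<partial>^i \<otimes> f i is represented by its finitely supported coefficient sequence f.\<close>

definition curr_carrier :: "(nat \<Rightarrow> 'v::zero) set" where
  "curr_carrier = {f. finite {i. f i \<noteq> 0}}"

definition curr_part :: "'v::zero set \<Rightarrow> (nat \<Rightarrow> 'v) set" where
  "curr_part S = {f \<in> curr_carrier. \<forall>i. f i \<in> S}"

definition curr_emb :: "'v::zero \<Rightarrow> nat \<Rightarrow> 'v" where
  "curr_emb v = (\<lambda>i. if i = 0 then v else 0)"

definition curr_D :: "(nat \<Rightarrow> 'v::zero) \<Rightarrow> nat \<Rightarrow> 'v" where
  "curr_D f = (\<lambda>i. case i of 0 \<Rightarrow> 0 | Suc j \<Rightarrow> f j)"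

definition curr_scale :: "('k \<Rightarrow> 'v \<Rightarrow> 'v) \<Rightarrow> 'k \<Rightarrow> (nat \<Rightarrow> 'v) \<Rightarrow> nat \<Rightarrow> 'v" where
  "curr_scale scale c f = (\<lambda>i. scale c (f i))"

text \<open>n-th products, from the lambda-bracket
  [p(\<partial>)v_\<lambda> q(\<partial>)w] = p(-\<lambda>) q(\<partial>+\<lambda>) [v,w] = \<Sum>n \<lambda>^n/n! a_(n) b.
  For a = \<partial>^p v, b = \<partial>^q w this gives
  a_(n) b = n! (-1)^p (q choose (n-p)) \<partial>^(p+q-n) [v,w]  (zero unless p \<le> n \<le> p+q).
  Collecting the coefficient of \<partial>^m (so q = m+n-p):\<close>
definition curr_nprod ::
  "('k::field \<Rightarrow> 'v::ab_group_add \<Rightarrow> 'v) \<Rightarrow> ('v \<Rightarrow> 'v \<Rightarrow> 'v) \<Rightarrow> nat \<Rightarrow>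
   (nat \<Rightarrow> 'v) \<Rightarrow> (nat \<Rightarrow> 'v) \<Rightarrow> nat \<Rightarrow> 'v" where
  "curr_nprod scale br n f g = (\<lambda>m.
     \<Sum>p\<le>n. scale ((-1) ^ p * of_nat (fact n * ((m + n - p) choose (n - p))))
                   (br (f p) (g (m + n - p))))"

definition curr_automorphism ::
  "('k::field \<Rightarrow> 'v::ab_group_add \<Rightarrow> 'v) \<Rightarrow> ('v \<Rightarrow> 'v \<Rightarrow> 'v) \<Rightarrow> 'v set \<Rightarrow> 'v set \<Rightarrow>
   ((nat \<Rightarrow> 'v) \<Rightarrow> (nat \<Rightarrow> 'v)) \<Rightarrow> bool" where
  "curr_automorphism scale br V0 V1 \<sigma> \<longleftrightarrow>
     bij_betw \<sigma> curr_carrier curr_carrier \<and>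
     (\<forall>f\<in>curr_carrier. \<forall>g\<in>curr_carrier. \<sigma> (\<lambda>i. f i + g i) = (\<lambda>i. \<sigma> f i + \<sigma> g i)) \<and>
     (\<forall>c. \<forall>f\<in>curr_carrier. \<sigma> (curr_scale scale c f) = curr_scale scale c (\<sigma> f)) \<and>
     (\<forall>f\<in>curr_part V0. \<sigma> f \<in> curr_part V0) \<and>
     (\<forall>f\<in>curr_part V1. \<sigma> f \<in> curr_part V1) \<and>
     (\<forall>f\<in>curr_carrier. \<sigma> (curr_D f) = curr_D (\<sigma> f)) \<and>
     (\<forall>n. \<forall>f\<in>curr_carrier. \<forall>g\<in>curr_carrier.
        \<sigma> (curr_nprod scale br n f g) = curr_nprod scale br n (\<sigma> f) (\<sigma> g))"

end

theory Submission imports Defs begin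

locale cs_set =
  fixes scale :: "'k::field_char_0 \<Rightarrow> 'v::ab_group_add \<Rightarrow> 'v"
    and br :: "'v \<Rightarrow> 'v \<Rightarrow> 'v"
    and V0 V1 :: "'v set"
    and \<phi> :: "nat \<Rightarrow> 'v \<Rightarrow> 'v"
  assumes lie: "lie_superalgebra scale br V0 V1"
    and cz: "\<forall>W. super_ideal scale br V0 V1 W \<longrightarrow> centre br W = {0}"
    and padd: "\<And>i x y. \<phi> i (x + y) = \<phi> i x + \<phi> i y"
    and psc: "\<And>i c x. \<phi> i (scale c x) = scale c (\<phi> i x)"
    and par0: "\<And>i x. x \<in> V0 \<Longrightarrow> \<phi> i x \<in> V0"
    and par1: "\<And>i x. x \<in> V1 \<Longrightarrow> \<phi> i x \<in> V1"
    and fin: "\<And>x. finite {i. \<phi> i x \<noteq> 0}"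
    and surj: "\<And>u. \<exists>x. \<phi> 0 x = u"
    and rA: "\<And>m v w. \<phi> m (br v w) = br (\<phi> 0 v) (\<phi> m w)"
    and rB: "\<And>m v w. br (\<phi> 1 v) (\<phi> m w) = scale (of_nat (Suc m)) (\<phi> (Suc m) (br v w))"
begin

sublocale vector_space scale
  using lie unfolding lie_superalgebra_def by auto

lemma sub0: "subspace V0" and sub1: "subspace V1" and V01: "V0 \<inter> V1 = {0}"
  and dec: "\<And>v. \<exists>a\<in>V0. \<exists>b\<in>V1. v = a + b"
  and bradd1: "\<And>a b c. br (a + b) c = br a c + br b c"
  and bradd2: "\<And>a b c. br a (b + c) = br a b + br a c"
  using lie unfolding lie_superalgebra_def by auto

lemma br0l[simp]: "br 0 c = 0"
  using bradd1[of 0 0 c] by simp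
lemma br0r[simp]: "br c 0 = 0"
  using bradd2[of c 0 0] by simp

lemma p0[simp]: "\<phi> i 0 = 0"
  using padd[of i 0 0] by simp

lemma uniq0:
  assumes "a \<in> V0" "b \<in> V1" "a' \<in> V0" "b' \<in> V1" "a + b = a' + b'"
  shows "a = a'" "b = b'"
proof -
  have "a - a' = b' - b" using assms(5) by (simp add: algebra_simps)
  moreover have "a - a' \<in> V0" using sub0 assms subspace_diff by blast
  moreover have "b' - b \<in> V1" using sub1 assms subspace_diff by blast
  ultimately have "a - a' \<in> V0 \<inter> V1" by simp
  then have "a - a' = 0" using V01 by blast
  then show "a = a'" by simp
  with assms(5) show "b = b'" by simp
qed

lemma range_zero:
  assumes "\<forall>x y. \<phi> j (br x y) = 0"
  shows "\<phi> j x = 0"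
proof -
  define W where "W = range (\<phi> j)"
  have si: "super_ideal scale br V0 V1 W"
    unfolding super_ideal_def
  proof (intro conjI ballI allI)
    show "subspace W" unfolding subspace_def W_def
      by (metis (no_types, lifting) p0 padd psc rangeE rangeI)
  next
    fix w assume "w \<in> W"
    then obtain x where x: "w = \<phi> j x" unfolding W_def by auto
    obtain a b where ab: "a \<in> V0" "b \<in> V1" "x = a + b" using dec by blast
    show "\<exists>a\<in>W \<inter> V0. \<exists>b\<in>W \<inter> V1. w = a + b"
      using ab x par0 par1 padd unfolding W_def by blast
  next
    fix v w assume "w \<in> W"
    then obtain x where x: "w = \<phi> j x" unfolding W_def by auto
    obtain v' where "\<phi> 0 v' = v" using surj by blast
    then have "br v w = \<phi> j 0" using rA[of j v' x] assms x by simp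
    then show "br v w \<in> W" unfolding W_def by blast
  qed
  have "centre br W = W"
  proof -
    { fix w u assume "w \<in> W" "u \<in> W"
      then obtain y where y: "u = \<phi> j y" unfolding W_def by auto
      obtain w' where "\<phi> 0 w' = w" using surj by blast
      then have "br w u = 0" using rA[of j w' y] assms y by simp }
    then show ?thesis unfolding centre_def by auto
  qed
  with si cz have "W = {0}" by auto
  then show ?thesis unfolding W_def by auto
qed

lemma key: "\<phi> 1 (br v w) = 0"
proof (rule ccontr)
  assume ne: "\<phi> 1 (br v w) \<noteq> 0"
  define S where "S = {i. \<phi> i (br v w) \<noteq> 0}"
  have finS: "finite S" unfolding S_def by (rule fin)
  have "1 \<in> S" using ne unfolding S_def by simp
  define k where "k = Max S"
  have kS: "k \<in> S" unfolding k_def using finS \<open>1 \<in> S\<close> by (intro Max_in) auto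
  have k1: "k \<ge> 1" unfolding k_def using finS \<open>1 \<in> S\<close> by simp
  have "Suc k \<notin> S" using finS k_def
    by (metis Max_ge Suc_n_not_le_n)
  then have zs: "\<phi> (Suc k) (br v w) = 0" unfolding S_def by simp
  define u where "u = \<phi> k (br v w)"
  have un: "u \<noteq> 0" using kS unfolding u_def S_def by simp
  obtain w' where w': "\<phi> 0 w' = \<phi> k w" using surj by blast
  have u1: "u = \<phi> 0 (br v w')" unfolding u_def using rA[of k v w] rA[of 0 v w'] w' by simp
  have u2: "\<phi> 1 (br v w') = 0"
    using rB[of v 0 w'] rB[of v k w] w' zs by simp
  obtain w'' where w'': "\<phi> 0 w'' = \<phi> (k - 1) w" using surj by blast
  have h: "scale (of_nat k) u = \<phi> 1 (br v w'')"
    using rB[of v "k - 1" w] rB[of v 0 w''] w'' k1 unfolding u_def by simp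
  have kz: "(of_nat k :: 'k) \<noteq> 0" using k1 by simp
  have u3: "u = \<phi> 1 (scale (1 / of_nat k) (br v w''))"
  proof -
    have "\<phi> 1 (scale (1 / of_nat k) (br v w'')) = scale (1 / of_nat k) (scale (of_nat k) u)"
      by (simp only: psc h)
    also have "\<dots> = scale (1 / of_nat k * of_nat k) u" by (rule scale_scale)
    also have "1 / of_nat k * of_nat k = (1::'k)" using kz by (rule divide_inverse_commute[THEN sym, THEN trans] | simp)
    finally show ?thesis by (simp only: scale_one)
  qed
  define W where "W = {x. (\<exists>s. x = \<phi> 1 s) \<and> (\<exists>t. x = \<phi> 0 t \<and> \<phi> 1 t = 0)}"
  have uW: "u \<in> W" unfolding W_def using u1 u2 u3 by blast
  have si: "super_ideal scale br V0 V1 W"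
    unfolding super_ideal_def
  proof (intro conjI ballI allI)
    show "subspace W" unfolding subspace_def
    proof (intro conjI ballI allI)
      show "0 \<in> W" unfolding W_def mem_Collect_eq by (rule conjI; rule exI[of _ 0]; simp)
    next
      fix x y assume "x \<in> W" "y \<in> W"
      then obtain s t s' t' where st: "x = \<phi> 1 s" "x = \<phi> 0 t" "\<phi> 1 t = 0"
        "y = \<phi> 1 s'" "y = \<phi> 0 t'" "\<phi> 1 t' = 0" unfolding W_def by blast
      have "x + y = \<phi> 1 (s + s')" using st(1,4) by (simp add: padd)
      moreover have "x + y = \<phi> 0 (t + t')" using st(2,5) by (simp add: padd)
      moreover have "\<phi> 1 (t + t') = 0" using st(3,6) by (simp add: padd)
      ultimately show "x + y \<in> W" unfolding W_def by blast
    next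
      fix c x assume "x \<in> W"
      then obtain s t where st: "x = \<phi> 1 s" "x = \<phi> 0 t" "\<phi> 1 t = 0" unfolding W_def by blast
      have "scale c x = \<phi> 1 (scale c s)" using st(1) by (simp add: psc)
      moreover have "scale c x = \<phi> 0 (scale c t)" using st(2) by (simp add: psc)
      moreover have "\<phi> 1 (scale c t) = 0" using st(3) by (simp add: psc)
      ultimately show "scale c x \<in> W" unfolding W_def by blast
    qed
  next
    fix x assume "x \<in> W"
    then obtain s t where st: "x = \<phi> 1 s" "x = \<phi> 0 t" "\<phi> 1 t = 0" unfolding W_def by blast
    obtain s0 s1 where s: "s0 \<in> V0" "s1 \<in> V1" "s = s0 + s1" using dec by blast
    obtain t0 t1 where t: "t0 \<in> V0" "t1 \<in> V1" "t = t0 + t1" using dec by blast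
    have "\<phi> 1 t0 + \<phi> 1 t1 = 0 + 0" using st t padd by simp
    then have z: "\<phi> 1 t0 = 0" "\<phi> 1 t1 = 0"
      using uniq0[of "\<phi> 1 t0" "\<phi> 1 t1" 0 0] par0 par1 t sub0 sub1 subspace_0 by blast+
    have "\<phi> 1 s0 + \<phi> 1 s1 = \<phi> 0 t0 + \<phi> 0 t1" using st s t padd by simp
    moreover have "\<phi> 1 s0 \<in> V0" "\<phi> 1 s1 \<in> V1" "\<phi> 0 t0 \<in> V0" "\<phi> 0 t1 \<in> V1"
      using par0 par1 s t by auto
    ultimately have e: "\<phi> 1 s0 = \<phi> 0 t0" "\<phi> 1 s1 = \<phi> 0 t1"
      using uniq0 by blast+
    show "\<exists>a\<in>W \<inter> V0. \<exists>b\<in>W \<inter> V1. x = a + b"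
    proof (intro bexI)
      show "x = \<phi> 1 s0 + \<phi> 1 s1" using st s padd by simp
      show "\<phi> 1 s0 \<in> W \<inter> V0" unfolding W_def using e z par0 s by blast
      show "\<phi> 1 s1 \<in> W \<inter> V1" unfolding W_def using e z par1 s by blast
    qed
  next
    fix r x assume "x \<in> W"
    then obtain s t where st: "x = \<phi> 1 s" "x = \<phi> 0 t" "\<phi> 1 t = 0" unfolding W_def by blast
    obtain r' where r': "\<phi> 0 r' = r" using surj by blast
    have "br r x = \<phi> 1 (br r' s)" using rA[of 1 r' s] r' st by simp
    moreover have "br r x = \<phi> 0 (br r' t)" using rA[of 0 r' t] r' st by simp
    moreover have "\<phi> 1 (br r' t) = 0" using rA[of 1 r' t] st by simp
    ultimately show "br r x \<in> W" unfolding W_def by blast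
  qed
  have "u \<in> centre br W"
    unfolding centre_def
  proof (intro CollectI conjI ballI)
    show "u \<in> W" by (rule uW)
    fix x assume "x \<in> W"
    then obtain s where s: "x = \<phi> 1 s" unfolding W_def by auto
    from uW obtain t where t: "u = \<phi> 0 t" "\<phi> 1 t = 0" unfolding W_def by auto
    have "br u x = \<phi> 1 (br t s)" using rA[of 1 t s] s t by simp
    also have "\<dots> = br (\<phi> 1 t) (\<phi> 0 s)" using rB[of t 0 s] by simp
    finally show "br u x = 0" using t by simp
  qed
  with si cz un show False by auto
qed

lemma all_zero:
  assumes "j \<ge> 1" shows "\<phi> j x = 0"
proof -
  have p1: "\<phi> 1 y = 0" for y by (rule range_zero) (intro allI key)
  have "\<phi> j (br v w) = 0" for v w
    using rB[of v "j - 1" w] p1 assms by simp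
  then show ?thesis by (intro range_zero) simp
qed

end


lemma emb_carrier: "curr_emb v \<in> curr_carrier"
proof -
  have "{i. curr_emb v i \<noteq> 0} \<subseteq> {0}" unfolding curr_emb_def by auto
  then show ?thesis unfolding curr_carrier_def by (auto intro: finite_subset)
qed

lemma zero_carrier: "(\<lambda>_. 0) \<in> curr_carrier"
  unfolding curr_carrier_def by simp

lemma D_carrier: "f \<in> curr_carrier \<Longrightarrow> curr_D f \<in> curr_carrier"
proof -
  assume "f \<in> curr_carrier"
  then have "finite (Suc ` {i. f i \<noteq> 0})" unfolding curr_carrier_def by simp
  moreover have "{i. curr_D f i \<noteq> 0} \<subseteq> Suc ` {i. f i \<noteq> 0}"
  proof
    fix i assume "i \<in> {i. curr_D f i \<noteq> 0}"
    then show "i \<in> Suc ` {i. f i \<noteq> 0}" by (cases i) (auto simp: curr_D_def)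
  qed
  ultimately show ?thesis unfolding curr_carrier_def by (auto intro: finite_subset)
qed

lemma shift_carrier: "h \<in> curr_carrier \<Longrightarrow> (\<lambda>i. h (Suc i)) \<in> curr_carrier"
proof -
  assume "h \<in> curr_carrier"
  then have "finite {i. h i \<noteq> 0}" unfolding curr_carrier_def by simp
  then have "finite (Suc -` {i. h i \<noteq> 0})"
    using finite_vimageI inj_Suc by blast
  then show ?thesis unfolding curr_carrier_def by (simp add: vimage_def)
qed

theorem mainTheorem12:
  fixes scale :: "'k::field_char_0 \<Rightarrow> 'v::ab_group_add \<Rightarrow> 'v"
    and br :: "'v \<Rightarrow> 'v \<Rightarrow> 'v"
    and V0 V1 :: "'v set"
    and \<sigma> :: "(nat \<Rightarrow> 'v) \<Rightarrow> (nat \<Rightarrow> 'v)"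
  assumes "lie_superalgebra scale br V0 V1"
    and "\<forall>W. super_ideal scale br V0 V1 W \<longrightarrow> centre br W = {0}"
    and "curr_automorphism scale br V0 V1 \<sigma>"
  shows "\<forall>v. \<sigma> (curr_emb v) \<in> range curr_emb"
proof -
  note lie = assms(1)
  interpret vector_space scale using lie unfolding lie_superalgebra_def by auto
  have sub0: "subspace V0" and sub1: "subspace V1"
    and bradd1: "\<And>a b c. br (a + b) c = br a c + br b c"
    and bradd2: "\<And>a b c. br a (b + c) = br a b + br a c"
    using lie unfolding lie_superalgebra_def by auto
  have br0l[simp]: "br 0 c = 0" for c using bradd1[of 0 0 c] by simp
  have br0r[simp]: "br c 0 = 0" for c using bradd2[of c 0 0] by simp
  have bij: "bij_betw \<sigma> curr_carrier curr_carrier"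
    and sadd: "\<And>f g. f \<in> curr_carrier \<Longrightarrow> g \<in> curr_carrier \<Longrightarrow> \<sigma> (\<lambda>i. f i + g i) = (\<lambda>i. \<sigma> f i + \<sigma> g i)"
    and ssc: "\<And>c f. f \<in> curr_carrier \<Longrightarrow> \<sigma> (curr_scale scale c f) = curr_scale scale c (\<sigma> f)"
    and sp0: "\<And>f. f \<in> curr_part V0 \<Longrightarrow> \<sigma> f \<in> curr_part V0"
    and sp1: "\<And>f. f \<in> curr_part V1 \<Longrightarrow> \<sigma> f \<in> curr_part V1"
    and sD: "\<And>f. f \<in> curr_carrier \<Longrightarrow> \<sigma> (curr_D f) = curr_D (\<sigma> f)"
    and snp: "\<And>n f g. f \<in> curr_carrier \<Longrightarrow> g \<in> curr_carrier \<Longrightarrow>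
        \<sigma> (curr_nprod scale br n f g) = curr_nprod scale br n (\<sigma> f) (\<sigma> g)"
    using assms(3) unfolding curr_automorphism_def by blast+
  have sz: "\<sigma> (\<lambda>_. 0) = (\<lambda>_. 0)"
  proof
    fix i
    have e: "\<sigma> (\<lambda>i. (\<lambda>_. 0::'v) i + (\<lambda>_. 0) i) = (\<lambda>i. \<sigma> (\<lambda>_. 0) i + \<sigma> (\<lambda>_. 0) i)"
      by (rule sadd[OF zero_carrier zero_carrier])
    have "(\<lambda>i. (\<lambda>_. 0::'v) i + (\<lambda>_. 0) i) = (\<lambda>_. 0)" by simp
    with e have "\<sigma> (\<lambda>_. 0) i = \<sigma> (\<lambda>_. 0) i + \<sigma> (\<lambda>_. 0) i" by (metis (no_types))
    then show "\<sigma> (\<lambda>_. 0) i = 0" by simp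
  qed
  define \<phi> where "\<phi> i v = \<sigma> (curr_emb v) i" for i v
  have npe: "curr_nprod scale br n (curr_emb v) (curr_emb w) =
      (if n = 0 then curr_emb (br v w) else (\<lambda>_. 0))" for n v w
  proof
    fix m
    define T where "T p = scale ((-1) ^ p * of_nat (fact n * ((m + n - p) choose (n - p))))
                   (br (curr_emb v p) (curr_emb w (m + n - p)))" for p
    have "curr_nprod scale br n (curr_emb v) (curr_emb w) m = sum T {..n}"
      unfolding curr_nprod_def T_def by simp
    also have "\<dots> = T 0 + sum T ({..n} - {0})" by (rule sum.remove) auto
    also have "sum T ({..n} - {0}) = 0" by (rule sum.neutral) (auto simp: T_def curr_emb_def)
    also have "T 0 = scale (of_nat (fact n * ((m + n) choose n))) (br v (curr_emb w (m + n)))"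
      unfolding T_def by (simp add: curr_emb_def)
    finally show "curr_nprod scale br n (curr_emb v) (curr_emb w) m =
      (if n = 0 then curr_emb (br v w) else (\<lambda>_. 0)) m"
      by (cases "m + n = 0") (auto simp: curr_emb_def)
  qed
  have np0: "curr_nprod scale br 0 f g m = br (f 0) (g m)" for f g m
    unfolding curr_nprod_def by simp
  have np1: "curr_nprod scale br 1 f g m =
     scale (of_nat (Suc m)) (br (f 0) (g (Suc m))) + scale (-1) (br (f 1) (g m))" for f g m
    unfolding curr_nprod_def by (simp add: atMost_Suc)
  have rA: "\<phi> m (br v w) = br (\<phi> 0 v) (\<phi> m w)" for m v w
  proof -
    have "\<sigma> (curr_emb (br v w)) = curr_nprod scale br 0 (\<sigma> (curr_emb v)) (\<sigma> (curr_emb w))"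
      using snp[OF emb_carrier emb_carrier, of 0 v w] npe[of 0 v w] by (simp only: simp_thms if_True)
    then have "\<sigma> (curr_emb (br v w)) m = curr_nprod scale br 0 (\<sigma> (curr_emb v)) (\<sigma> (curr_emb w)) m"
      by (rule fun_cong)
    then show ?thesis unfolding \<phi>_def np0 .
  qed
  have rB: "br (\<phi> 1 v) (\<phi> m w) = scale (of_nat (Suc m)) (\<phi> (Suc m) (br v w))" for m v w
  proof -
    have "\<sigma> (\<lambda>_. 0) = curr_nprod scale br 1 (\<sigma> (curr_emb v)) (\<sigma> (curr_emb w))"
      using snp[OF emb_carrier emb_carrier, of 1 v w] npe[of 1 v w] by simp
    then have "(\<lambda>_. 0) = curr_nprod scale br 1 (\<sigma> (curr_emb v)) (\<sigma> (curr_emb w))"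
      by (simp only: sz)
    then have "0 = curr_nprod scale br 1 (\<sigma> (curr_emb v)) (\<sigma> (curr_emb w)) m"
      by (rule fun_cong)
    then have "0 = scale (of_nat (Suc m)) (br (\<phi> 0 v) (\<phi> (Suc m) w)) + scale (-1) (br (\<phi> 1 v) (\<phi> m w))"
      unfolding \<phi>_def np1 .
    then have "br (\<phi> 1 v) (\<phi> m w) = scale (of_nat (Suc m)) (br (\<phi> 0 v) (\<phi> (Suc m) w))"
      by (simp only: scale_minus_left scale_one) (simp add: eq_neg_iff_add_eq_0 add.commute)
    then show ?thesis by (simp only: rA[of "Suc m" v w])
  qed
  have emb_add: "curr_emb (x + y) = (\<lambda>i. curr_emb x i + curr_emb y i)" for x y :: 'v
    unfolding curr_emb_def by (rule ext) simp
  have padd: "\<phi> i (x + y) = \<phi> i x + \<phi> i y" for i x y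
    unfolding \<phi>_def emb_add using sadd[OF emb_carrier emb_carrier] by simp
  have psc: "\<phi> i (scale c x) = scale c (\<phi> i x)" for i c x
  proof -
    have "curr_emb (scale c x) = curr_scale scale c (curr_emb x)"
      unfolding curr_emb_def curr_scale_def by auto
    then show ?thesis unfolding \<phi>_def using ssc[OF emb_carrier] by (simp add: curr_scale_def)
  qed
  have par0: "\<phi> i x \<in> V0" if "x \<in> V0" for i x
  proof -
    have "curr_emb x \<in> curr_part V0" unfolding curr_part_def
      using emb_carrier that subspace_0[OF sub0] by (auto simp: curr_emb_def)
    then show ?thesis using sp0 unfolding \<phi>_def curr_part_def by blast
  qed
  have par1: "\<phi> i x \<in> V1" if "x \<in> V1" for i x
  proof -
    have "curr_emb x \<in> curr_part V1" unfolding curr_part_def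
      using emb_carrier that subspace_0[OF sub1] by (auto simp: curr_emb_def)
    then show ?thesis using sp1 unfolding \<phi>_def curr_part_def by blast
  qed
  have fin: "finite {i. \<phi> i x \<noteq> 0}" for x
    using bij_betwE[OF bij] emb_carrier unfolding \<phi>_def curr_carrier_def by blast
  have surj: "\<exists>x. \<phi> 0 x = u" for u
  proof -
    obtain h where h: "h \<in> curr_carrier" "\<sigma> h = curr_emb u"
      using bij_betw_imp_surj_on[OF bij] emb_carrier by (metis imageE)
    define h' where "h' = (\<lambda>i. h (Suc i))"
    have h'c: "h' \<in> curr_carrier" unfolding h'_def using h(1) by (rule shift_carrier)
    have "h = (\<lambda>i. curr_emb (h 0) i + curr_D h' i)"
      unfolding curr_emb_def curr_D_def h'_def by (auto split: nat.splits)
    then have "\<sigma> h = (\<lambda>i. \<sigma> (curr_emb (h 0)) i + \<sigma> (curr_D h') i)"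
      using sadd[OF emb_carrier D_carrier[OF h'c]] by metis
    then have "\<sigma> h 0 = \<phi> 0 (h 0)" unfolding \<phi>_def using sD[OF h'c] by (simp add: curr_D_def)
    then show ?thesis using h(2) by (auto simp: curr_emb_def)
  qed
  interpret cs: cs_set scale br V0 V1 \<phi>
    using assms(1,2) padd psc par0 par1 fin surj rA rB by unfold_locales auto
  show ?thesis
  proof
    fix v
    have "\<sigma> (curr_emb v) = curr_emb (\<phi> 0 v)"
    proof
      fix i show "\<sigma> (curr_emb v) i = curr_emb (\<phi> 0 v) i"
        using cs.all_zero[of i v] unfolding \<phi>_def curr_emb_def by (cases i) auto
    qed
    then show "\<sigma> (curr_emb v) \<in> range curr_emb" by simp
  qed
qed

end
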